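(* Let $A:\mathbb{R}^d\rightrightarrows\mathbb{R}^d$ be maximal monotone with $A^{-1}(0)\neq\emptyset$ and $\mathrm{dom}(A)$ closed and bounded, let $p\geq1$ be an integer, $\sigma\in(0,1)$, $\theta>0$, $x_0\in\mathbb{R}^d$. Suppose sequences $\lambda_k>0$, $y_k,v_k,x_k\in\mathbb{R}^d$, $\epsilon_k\geq0$ ($k\geq1$) satisfy, for every $k\geq0$, \[ v_{k+1}\in A^{\epsilon_{k+1}}(y_{k+1}),\quad \|\lambda_{k+1}v_{k+1}+y_{k+1}-x_k\|^2+2\lambda_{k+1}\epsilon_{k+1}\leq\sigma^2\|y_{k+1}-x_k\|^2,\quad \lambda_{k+1}\|y_{k+1}-x_k\|^{p-1}\geq\theta, \] and $x_{k+1}=x_k-\lambda_{k+1}v_{k+1}$. Let $\tilde y_k=\frac{1}{\sum_{i=1}^k\lambda_i}\sum_{i=1}^k\lambda_iy_i$. Then for integers $k\geq1$, \[ \textsc{gap}(\tilde y_k)=O(k^{-\frac{p+1}{2}}),\qquad \inf_{1\leq i\leq k}\|v_i\|=O(k^{-\frac p2}),\qquad \inf_{1\leq i\leq k}\epsilon_i=O(k^{-\frac{p+1}{2}}). \] In addition, if $\epsilon_k=0$ for all $k\geq1$ and the error bound condition holds (there exist $\delta,\kappa>0$ such that $\textsc{dist}(0,Ax)\leq\delta$ implies $\textsc{dist}(x,A^{-1}(0))\leq\kappa\,\textsc{dist}(0,Ax)$), then $\{x_k\}$ converges to $A^{-1}(0)$ at a local linear rate, i.e., there exist $k_0$ and $q\in(0,1)$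 with $\textsc{dist}(x_{k+1},A^{-1}(0))^2\leq q\,\textsc{dist}(x_k,A^{-1}(0))^2$ for all $k\geq k_0$.
   Context: The $\epsilon$-enlargement of $A$ is $A^{\epsilon}(x)=\{v\in\mathbb{R}^d:\langle x-\tilde x,v-\tilde v\rangle\geq-\epsilon\ \forall\tilde x\in\mathbb{R}^d,\ \forall\tilde v\in A\tilde x\}$. The gap function is $\textsc{gap}(x)=\sup_{z\in\mathrm{dom}(A)}\sup_{\xi\in Az}\langle\xi,x-z\rangle$; $\textsc{dist}(x,S)=\inf_{z\in S}\|x-z\|$. These sequences are the iterates of the paper's "conceptual algorithmic framework" (run without hitting the stopping test $0\in Ax_k$). *)

theory Defs
  imports "HOL-Analysis.Analysis"
begin

definition mono_op :: "('a::real_inner \<Rightarrow> 'a set) \<Rightarrow> bool" where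
  "mono_op A \<longleftrightarrow> (\<forall>x y u v. u \<in> A x \<longrightarrow> v \<in> A y \<longrightarrow> inner (x - y) (u - v) \<ge> 0)"

definition maximal_monotone :: "('a::real_inner \<Rightarrow> 'a set) \<Rightarrow> bool" where
  "maximal_monotone A \<longleftrightarrow> mono_op A \<and>
     (\<forall>x u. (\<forall>y v. v \<in> A y \<longrightarrow> inner (x - y) (u - v) \<ge> 0) \<longrightarrow> u \<in> A x)"

definition op_dom :: "('a \<Rightarrow> 'b set) \<Rightarrow> 'a set" where
  "op_dom A = {x. A x \<noteq> {}}"

definition zeros :: "('a \<Rightarrow> 'b::zero set) \<Rightarrow> 'a set" where
  "zeros A = {x. 0 \<in> A x}"

definition enlargement :: "('a::real_inner \<Rightarrow> 'a set) \<Rightarrow> real \<Rightarrow> 'a \<Rightarrow> 'a set" where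
  "enlargement A \<epsilon> x = {v. \<forall>x' v'. v' \<in> A x' \<longrightarrow> inner (x - x') (v - v') \<ge> - \<epsilon>}"

text \<open>Gap function, valued in the extended reals (the supremum may a priori be infinite).\<close>
definition gap :: "('a::real_inner \<Rightarrow> 'a set) \<Rightarrow> 'a \<Rightarrow> ereal" where
  "gap A x = (SUP z\<in>op_dom A. SUP \<xi>\<in>A z. ereal (inner \<xi> (x - z)))"

end

theory Submission imports Defs begin

lemma tangent_powr:
  fixes s t m :: real
  assumes "s \<ge> 0" "t > 0" "m > 0"
  shows "m powr (-s) * (1 - s * (t / m - 1)) \<le> t powr (-s)"
proof -
  have "t powr (-s) = m powr (-s) * (t / m) powr (-s)"
    using assms by (simp add: powr_divide)
  moreover have "(t / m) powr (-s) = exp (- s * ln (t / m))"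
    using assms by (simp add: powr_def)
  moreover have "1 - s * (t / m - 1) \<le> 1 - s * ln (t / m)"
    using ln_le_minus_one[of "t/m"] assms by (simp add: mult_left_mono)
  moreover have "1 - s * ln (t / m) \<le> exp (- s * ln (t / m))"
    using exp_ge_add_one_self[of "- s * ln (t / m)"] by simp
  ultimately show ?thesis using assms
    by (metis (no_types, opaque_lifting) dual_order.trans mult_left_mono powr_ge_zero)
qed

lemma pow_as_powr:
  fixes b :: real
  assumes "b \<ge> 0" "n > 0"
  shows "b ^ n = (b\<^sup>2) powr (real n / 2)"
proof (cases "b = 0")
  case True then show ?thesis using assms by simp
next
  case False
  then have "b > 0" using assms by simp
  then have "(b\<^sup>2) powr (real n / 2) = (b powr 2) powr (real n / 2)"
    by (simp add: powr_realpow)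
  also have "\<dots> = b powr (real n)" by (simp add: powr_powr)
  also have "\<dots> = b ^ n" using \<open>b > 0\<close> by (simp add: powr_realpow)
  finally show ?thesis by simp
qed

lemma zeros_closed:
  fixes A :: "'a::euclidean_space \<Rightarrow> 'a set"
  assumes "maximal_monotone A"
  shows "closed (zeros A)"
proof -
  have "zeros A = (\<Inter>(y,w)\<in>{(y,w). w \<in> A y}. {x. inner (-w) x \<ge> inner (-w) y})"
  proof (intro set_eqI iffI)
    fix x assume "x \<in> zeros A"
    then have "0 \<in> A x" by (simp add: zeros_def)
    then show "x \<in> (\<Inter>(y,w)\<in>{(y,w). w \<in> A y}. {x. inner (-w) x \<ge> inner (-w) y})"
      using assms unfolding maximal_monotone_def mono_op_def
      by (force simp: inner_diff_left inner_diff_right inner_commute)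
  next
    fix x assume "x \<in> (\<Inter>(y,w)\<in>{(y,w). w \<in> A y}. {x. inner (-w) x \<ge> inner (-w) y})"
    then have "\<forall>y w. w \<in> A y \<longrightarrow> inner (x - y) (0 - w) \<ge> 0"
      by (force simp: inner_diff_left inner_diff_right inner_commute)
    then show "x \<in> zeros A" using assms unfolding maximal_monotone_def zeros_def by blast
  qed
  then show ?thesis by (auto intro!: closed_INT closed_halfspace_ge closed_halfspace_le)
qed

lemma step_ineq:
  fixes a b c w z \<xi> :: "'a::real_inner"
  assumes b: "b = a - l *\<^sub>R w"
    and err: "(norm (l *\<^sub>R w + c - a))\<^sup>2 + 2 * l * e \<le> \<sigma>\<^sup>2 * (norm (c - a))\<^sup>2"
    and enl: "inner (c - z) (w - \<xi>) \<ge> - e"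
    and l: "l > 0"
  shows "2 * l * inner \<xi> (c - z) \<le> (norm (a - z))\<^sup>2 - (norm (b - z))\<^sup>2 - (1 - \<sigma>\<^sup>2) * (norm (c - a))\<^sup>2"
proof -
  have e1: "inner \<xi> (c - z) \<le> inner w (c - z) + e"
    using enl by (simp add: inner_diff_right inner_commute)
  have e2: "2 * l * inner \<xi> (c - z) \<le> 2 * l * inner w (c - z) + 2 * l * e"
    using mult_left_mono[OF e1, of "2*l"] l by (simp add: algebra_simps)
  have id: "2 * l * inner w (c - z) = (norm (a - z))\<^sup>2 - (norm (b - z))\<^sup>2 + (norm (l *\<^sub>R w + c - a))\<^sup>2 - (norm (c - a))\<^sup>2"
    unfolding b power2_norm_eq_inner
    by (simp add: inner_diff_left inner_diff_right inner_add_left inner_add_right inner_commute algebra_simps)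
  show ?thesis using e2 id err by (simp add: algebra_simps)
qed

lemma step_bounds:
  fixes a c w :: "'a::real_inner"
  assumes err: "(norm (l *\<^sub>R w + c - a))\<^sup>2 + 2 * l * e \<le> \<sigma>\<^sup>2 * (norm (c - a))\<^sup>2"
    and ls: "l * norm (c - a) ^ (p - 1) \<ge> \<theta>"
    and l: "l > 0" and e: "e \<ge> 0" and p: "p \<ge> 1" and s: "\<sigma> > 0"
  shows "\<theta> * norm w \<le> (1 + \<sigma>) * norm (c - a) ^ p"
    and "2 * \<theta> * e \<le> \<sigma>\<^sup>2 * norm (c - a) ^ (p + 1)"
    and "l * norm w \<le> (1 + \<sigma>) * norm (c - a)"
proof -
  let ?b = "norm (c - a)"
  have "(norm (l *\<^sub>R w + c - a))\<^sup>2 \<le> (\<sigma> * ?b)\<^sup>2"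
  proof -
    have "0 \<le> 2 * l * e" using l e by simp
    then show ?thesis using err unfolding power_mult_distrib by linarith
  qed
  then have n1: "norm (l *\<^sub>R w + c - a) \<le> \<sigma> * ?b"
    using s by (meson power2_le_imp_le mult_nonneg_nonneg norm_ge_zero less_imp_le)
  have "l * norm w = norm (l *\<^sub>R w)" using l by simp
  also have "\<dots> = norm ((l *\<^sub>R w + c - a) - (c - a))" by (simp add: algebra_simps)
  also have "\<dots> \<le> norm (l *\<^sub>R w + c - a) + ?b" by (rule norm_triangle_ineq4)
  finally show lw: "l * norm w \<le> (1 + \<sigma>) * ?b" using n1 by (simp add: algebra_simps)
  have "\<theta> * norm w \<le> l * ?b ^ (p - 1) * norm w"
    using ls by (simp add: mult_right_mono)
  also have "\<dots> = ?b ^ (p - 1) * (l * norm w)" by simp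
  also have "\<dots> \<le> ?b ^ (p - 1) * ((1 + \<sigma>) * ?b)"
    using lw by (simp add: mult_left_mono)
  also have "\<dots> = (1 + \<sigma>) * ?b ^ (p - 1 + 1)" by (simp add: power_add)
  also have "p - 1 + 1 = p" using p by simp
  finally show "\<theta> * norm w \<le> (1 + \<sigma>) * ?b ^ p" .
  have "2 * \<theta> * e \<le> 2 * (l * ?b ^ (p - 1)) * e"
    using ls e by (simp add: mult_right_mono)
  also have "\<dots> = ?b ^ (p - 1) * (2 * l * e)" by simp
  also have "\<dots> \<le> ?b ^ (p - 1) * (\<sigma>\<^sup>2 * ?b\<^sup>2)"
  proof (rule mult_left_mono)
    have "0 \<le> (norm (l *\<^sub>R w + c - a))\<^sup>2" by simp
    then show "2 * l * e \<le> \<sigma>\<^sup>2 * ?b\<^sup>2" using err by linarith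
  qed simp
  also have "\<dots> = \<sigma>\<^sup>2 * ?b ^ (p - 1 + 2)" by (simp add: power_add power2_eq_square)
  also have "p - 1 + 2 = p + 1" using p by simp
  finally show "2 * \<theta> * e \<le> \<sigma>\<^sup>2 * ?b ^ (p + 1)" .
qed

theorem theorem4p1:
  fixes A :: "'a::euclidean_space \<Rightarrow> 'a set"
    and p :: nat and \<sigma> \<theta> :: real
    and lam eps :: "nat \<Rightarrow> real"
    and x y v :: "nat \<Rightarrow> 'a"
  assumes maxmono: "maximal_monotone A"
    and zeros_ne: "zeros A \<noteq> {}"
    and dom_closed: "closed (op_dom A)"
    and dom_bounded: "bounded (op_dom A)"
    and p_ge: "p \<ge> 1"
    and sigma: "0 < \<sigma>" "\<sigma> < 1"
    and theta: "\<theta> > 0"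
    and lam_pos: "\<And>k. k \<ge> 1 \<Longrightarrow> lam k > 0"
    and eps_nn: "\<And>k. k \<ge> 1 \<Longrightarrow> eps k \<ge> 0"
    and incl: "\<And>k. v (Suc k) \<in> enlargement A (eps (Suc k)) (y (Suc k))"
    and err: "\<And>k. (norm (lam (Suc k) *\<^sub>R v (Suc k) + y (Suc k) - x k))\<^sup>2
                   + 2 * lam (Suc k) * eps (Suc k) \<le> \<sigma>\<^sup>2 * (norm (y (Suc k) - x k))\<^sup>2"
    and large_step: "\<And>k. lam (Suc k) * norm (y (Suc k) - x k) ^ (p - 1) \<ge> \<theta>"
    and update: "\<And>k. x (Suc k) = x k - lam (Suc k) *\<^sub>R v (Suc k)"
  shows "(\<exists>C. \<forall>k\<ge>1. gap A ((1 / (\<Sum>i=1..k. lam i)) *\<^sub>R (\<Sum>i=1..k. lam i *\<^sub>R y i))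
              \<le> ereal (C * real k powr (- (real p + 1) / 2)))
       \<and> (\<exists>C. \<forall>k\<ge>1. (INF i\<in>{1..k}. norm (v i)) \<le> C * real k powr (- real p / 2))
       \<and> (\<exists>C. \<forall>k\<ge>1. (INF i\<in>{1..k}. eps i) \<le> C * real k powr (- (real p + 1) / 2))
       \<and> ((\<forall>k\<ge>1. eps k = 0) \<and>
          (\<exists>\<delta> \<kappa>. \<delta> > 0 \<and> \<kappa> > 0 \<and>
             (\<forall>z. A z \<noteq> {} \<and> infdist 0 (A z) \<le> \<delta> \<longrightarrow>
                  infdist z (zeros A) \<le> \<kappa> * infdist 0 (A z)))
          \<longrightarrow> (\<exists>k0. \<exists>q. 0 < q \<and> q < 1 \<and>
                 (\<forall>k\<ge>k0. (infdist (x (Suc k)) (zeros A))\<^sup>2 \<le> q * (infdist (x k) (zeros A))\<^sup>2)))"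
proof -
  define b where "b j = norm (y (Suc j) - x j)" for j
  have lamS: "lam (Suc k) > 0" for k using lam_pos by simp
  have epsS: "eps (Suc k) \<ge> 0" for k using eps_nn by simp
  have stepI: "2 * lam (Suc k) * inner \<xi> (y (Suc k) - z)
      \<le> (norm (x k - z))\<^sup>2 - (norm (x (Suc k) - z))\<^sup>2 - (1 - \<sigma>\<^sup>2) * (b k)\<^sup>2"
    if "\<xi> \<in> A z" for k z \<xi>
  proof -
    have "inner (y (Suc k) - z) (v (Suc k) - \<xi>) \<ge> - eps (Suc k)"
      using incl[of k] that unfolding enlargement_def by blast
    then show ?thesis unfolding b_def
      by (rule step_ineq[OF update err _ lamS])
  qed
  have bnd1: "\<theta> * norm (v (Suc k)) \<le> (1 + \<sigma>) * b k ^ p"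
   and bnd2: "2 * \<theta> * eps (Suc k) \<le> \<sigma>\<^sup>2 * b k ^ (p + 1)"
   and bnd3: "lam (Suc k) * norm (v (Suc k)) \<le> (1 + \<sigma>) * b k" for k
    unfolding b_def using step_bounds[OF err large_step lamS epsS p_ge sigma(1)] by auto
  have s2: "0 < 1 - \<sigma>\<^sup>2" using sigma by (simp add: power_less_one_iff)
  obtain xs where xs: "xs \<in> zeros A" using zeros_ne by blast
  then have xs0: "0 \<in> A xs" by (simp add: zeros_def)
  define S where "S = (norm (x 0 - xs))\<^sup>2 / (1 - \<sigma>\<^sup>2) + 1"
  have Spos: "S > 0" unfolding S_def using s2 by (simp add: add_nonneg_pos)
  have sumb: "(\<Sum>j<N. (b j)\<^sup>2) \<le> S" for N
  proof -
    have "(1 - \<sigma>\<^sup>2) * (b j)\<^sup>2 \<le> (norm (x j - xs))\<^sup>2 - (norm (x (Suc j) - xs))\<^sup>2" for j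
      using stepI[OF xs0, of j] by simp
    then have "(\<Sum>j<N. (1 - \<sigma>\<^sup>2) * (b j)\<^sup>2) \<le> (\<Sum>j<N. (norm (x j - xs))\<^sup>2 - (norm (x (Suc j) - xs))\<^sup>2)"
      by (rule sum_mono)
    also have "\<dots> = (norm (x 0 - xs))\<^sup>2 - (norm (x N - xs))\<^sup>2" by (rule sum_lessThan_telescope')
    also have "\<dots> \<le> (norm (x 0 - xs))\<^sup>2" by simp
    finally have "(1 - \<sigma>\<^sup>2) * (\<Sum>j<N. (b j)\<^sup>2) \<le> (norm (x 0 - xs))\<^sup>2"
      by (simp add: sum_distrib_left)
    then have "(\<Sum>j<N. (b j)\<^sup>2) \<le> (norm (x 0 - xs))\<^sup>2 / (1 - \<sigma>\<^sup>2)"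
      using s2 by (simp add: field_simps)
    then show ?thesis unfolding S_def by simp
  qed
  have minb: "\<exists>j<k. (b j)\<^sup>2 \<le> S / real k" if "k \<ge> 1" for k
  proof (rule ccontr)
    assume "\<not> ?thesis"
    then have "\<And>j. j \<in> {..<k} \<Longrightarrow> S / real k < (b j)\<^sup>2" by auto
    then have "(\<Sum>j<k. S / real k) < (\<Sum>j<k. (b j)\<^sup>2)"
      using that by (intro sum_strict_mono) (auto simp: lessThan_empty_iff)
    moreover have "(\<Sum>j<k. S / real k) = S" using that by simp
    ultimately show False using sumb[of k] by simp
  qed
  have powk: "(S / real k) powr r = S powr r * real k powr (- r)" for k r
  proof -
    have "(S / real k) powr r = S powr r / real k powr r" using Spos by (simp add: powr_divide)
    then show ?thesis by (simp add: powr_minus divide_inverse)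
  qed
  have bpow: "b j ^ n \<le> S powr (real n / 2) * real k powr (- (real n / 2))"
    if "(b j)\<^sup>2 \<le> S / real k" "n > 0" for j k n
  proof -
    have "b j ^ n = ((b j)\<^sup>2) powr (real n / 2)"
      using that(2) by (intro pow_as_powr) (auto simp: b_def)
    also have "\<dots> \<le> (S / real k) powr (real n / 2)"
      using that(1) by (intro powr_mono2) auto
    finally show ?thesis by (simp add: powk)
  qed
  have part2: "\<exists>C. \<forall>k\<ge>1. (INF i\<in>{1..k}. norm (v i)) \<le> C * real k powr (- real p / 2)"
  proof (intro exI allI impI)
    fix k :: nat assume k: "k \<ge> 1"
    obtain j where j: "j < k" "(b j)\<^sup>2 \<le> S / real k" using minb[OF k] by blast
    have "(INF i\<in>{1..k}. norm (v i)) \<le> norm (v (Suc j))"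
      using j(1) by (intro cINF_lower) (auto intro: bdd_belowI[of _ 0])
    also have "\<dots> \<le> (1 + \<sigma>) / \<theta> * b j ^ p"
      using bnd1[of j] theta by (simp add: field_simps)
    also have "\<dots> \<le> (1 + \<sigma>) / \<theta> * (S powr (real p / 2) * real k powr (- (real p / 2)))"
      using bpow[OF j(2), of p] p_ge sigma theta by (intro mult_left_mono) auto
    finally show "(INF i\<in>{1..k}. norm (v i)) \<le> ((1 + \<sigma>) / \<theta> * S powr (real p / 2)) * real k powr (- real p / 2)"
      by simp
  qed
  have part3: "\<exists>C. \<forall>k\<ge>1. (INF i\<in>{1..k}. eps i) \<le> C * real k powr (- (real p + 1) / 2)"
  proof (intro exI allI impI)
    fix k :: nat assume k: "k \<ge> 1"
    have "- (real (p + 1) / 2) = - (real p + 1) / 2" by (simp add: field_simps)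
    obtain j where j: "j < k" "(b j)\<^sup>2 \<le> S / real k" using minb[OF k] by blast
    have "(INF i\<in>{1..k}. eps i) \<le> eps (Suc j)"
      using j(1) eps_nn by (intro cINF_lower) (auto intro!: bdd_belowI[of _ 0])
    also have "\<dots> \<le> \<sigma>\<^sup>2 / (2 * \<theta>) * b j ^ (p + 1)"
      using bnd2[of j] theta by (simp add: field_simps)
    also have "\<dots> \<le> \<sigma>\<^sup>2 / (2 * \<theta>) * (S powr (real (p + 1) / 2) * real k powr (- (real (p + 1) / 2)))"
      using bpow[OF j(2), of "p + 1"] theta by (intro mult_left_mono) auto
    finally show "(INF i\<in>{1..k}. eps i) \<le> (\<sigma>\<^sup>2 / (2 * \<theta>) * S powr (real (p + 1) / 2)) * real k powr (- (real p + 1) / 2)"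
      using \<open>- (real (p + 1) / 2) = - (real p + 1) / 2\<close> by (simp only: mult.assoc)
  qed
  define s where "s = (real p - 1) / 2"
  have s0: "s \<ge> 0" using p_ge by (simp add: s_def)
  have lamlow: "lam (Suc j) \<ge> \<theta> * (m powr (-s) * (1 - s * ((b j)\<^sup>2 / m - 1)))" if m: "m > 0" for j m
  proof (cases "p = 1")
    case True
    then show ?thesis using large_step[of j] m by (simp add: s_def)
  next
    case False
    then have p2: "p - 1 > 0" using p_ge by simp
    have bpos: "b j > 0"
    proof (rule ccontr)
      assume "\<not> b j > 0"
      then have "b j = 0" by (simp add: b_def)
      then show False using large_step[of j] p2 theta by (simp add: b_def power_0_left)
    qed
    have "b j ^ (p - 1) = ((b j)\<^sup>2) powr s"
      using pow_as_powr[of "b j" "p - 1"] bpos p2 p_ge by (simp add: s_def of_nat_diff)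
    then have "lam (Suc j) * ((b j)\<^sup>2) powr s \<ge> \<theta>" using large_step[of j] by (simp add: b_def)
    then have "lam (Suc j) \<ge> \<theta> * ((b j)\<^sup>2) powr (-s)"
      using bpos by (simp add: powr_minus field_simps)
    moreover have "m powr (-s) * (1 - s * ((b j)\<^sup>2 / m - 1)) \<le> ((b j)\<^sup>2) powr (-s)"
      using tangent_powr[OF s0 _ m, of "(b j)\<^sup>2"] bpos by simp
    ultimately show ?thesis using theta by (smt (verit) mult_left_mono)
  qed
  define c where "c = \<theta> * S powr (-s)"
  have cpos: "c > 0" using theta Spos by (simp add: c_def)
  have Llow: "(\<Sum>i=1..k. lam i) \<ge> c * real k powr ((real p + 1) / 2)" if k: "k \<ge> 1" for k
  proof -
    define m where "m = S / real k"
    have m: "m > 0" using Spos k by (simp add: m_def)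
    have "(\<Sum>i=1..k. lam i) = (\<Sum>j<k. lam (Suc j))" by (simp add: sum.atLeast1_atMost_eq)
    also have "\<dots> \<ge> (\<Sum>j<k. \<theta> * (m powr (-s) * (1 - s * ((b j)\<^sup>2 / m - 1))))"
      by (intro sum_mono lamlow[OF m])
    finally have L1: "(\<Sum>i=1..k. lam i) \<ge> \<theta> * m powr (-s) * (real k * (1 + s) - s * (\<Sum>j<k. (b j)\<^sup>2) / m)"
      by (simp add: sum_distrib_left sum_subtractf sum_divide_distrib[symmetric] algebra_simps)
    have "s * (\<Sum>j<k. (b j)\<^sup>2) / m \<le> s * S / m"
      using sumb[of k] s0 m by (intro divide_right_mono mult_left_mono) auto
    also have "s * S / m = s * real k" using k Spos by (simp add: m_def)
    finally have "real k * (1 + s) - s * (\<Sum>j<k. (b j)\<^sup>2) / m \<ge> real k"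
      by (simp add: algebra_simps)
    then have "(\<Sum>i=1..k. lam i) \<ge> \<theta> * m powr (-s) * real k"
      using L1 theta by (smt (verit) mult_left_mono powr_ge_zero mult_nonneg_nonneg)
    also have "\<theta> * m powr (-s) * real k = \<theta> * S powr (-s) * (real k powr s * real k)"
      unfolding m_def powk by simp
    also have "real k powr s * real k = real k powr (s + 1)"
      using k by (simp add: powr_add)
    also have "s + 1 = (real p + 1) / 2" by (simp add: s_def field_simps)
    finally show ?thesis by (simp add: c_def)
  qed
  obtain B where B: "\<And>z. z \<in> op_dom A \<Longrightarrow> norm z \<le> B"
    using dom_bounded unfolding bounded_iff by blast
  define R where "R = (norm (x 0) + B)\<^sup>2"
  have R: "(norm (x 0 - z))\<^sup>2 \<le> R" if "z \<in> op_dom A" for z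
  proof -
    have "norm (x 0 - z) \<le> norm (x 0) + B" using B[OF that] norm_triangle_ineq4[of "x 0" z] by simp
    then show ?thesis unfolding R_def by (intro power_mono) auto
  qed
  have R0: "R \<ge> 0" by (simp add: R_def)
  have part1: "\<exists>C. \<forall>k\<ge>1. gap A ((1 / (\<Sum>i=1..k. lam i)) *\<^sub>R (\<Sum>i=1..k. lam i *\<^sub>R y i))
              \<le> ereal (C * real k powr (- (real p + 1) / 2))"
  proof (intro exI allI impI)
    fix k :: nat assume k: "k \<ge> 1"
    define L where "L = (\<Sum>i=1..k. lam i)"
    have Lc: "L \<ge> c * real k powr ((real p + 1) / 2)" using Llow[OF k] by (simp add: L_def)
    have kp: "real k powr ((real p + 1) / 2) > 0" using k by simp
    have Lpos: "L > 0" using Lc cpos kp by (smt (verit) mult_pos_pos)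
    have bound: "R / (2 * L) \<le> R / (2 * c) * real k powr (- (real p + 1) / 2)"
    proof -
      have "R / (2 * L) \<le> R / (2 * (c * real k powr ((real p + 1) / 2)))"
        using Lc R0 cpos kp Lpos by (intro divide_left_mono) auto
      also have "\<dots> = R / (2 * c) * real k powr (- (real p + 1) / 2)"
      proof -
        have "real k powr (- (real p + 1) / 2) = inverse (real k powr ((real p + 1) / 2))"
          unfolding minus_divide_left[symmetric] by (rule powr_minus)
        then show ?thesis by (simp add: field_simps)
      qed
      finally show ?thesis .
    qed
    show "gap A ((1 / L) *\<^sub>R (\<Sum>i=1..k. lam i *\<^sub>R y i))
              \<le> ereal (R / (2 * c) * real k powr (- (real p + 1) / 2))"
      unfolding gap_def
    proof (intro SUP_least)
      fix z \<xi> assume z: "z \<in> op_dom A" and \<xi>: "\<xi> \<in> A z"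
      have "(\<Sum>i=1..k. lam i *\<^sub>R (y i - z)) = (\<Sum>i=1..k. lam i *\<^sub>R y i) - L *\<^sub>R z"
        by (simp only: scaleR_diff_right sum_subtractf L_def scaleR_sum_left)
      then have eq1: "(1 / L) *\<^sub>R (\<Sum>i=1..k. lam i *\<^sub>R y i) - z = (1 / L) *\<^sub>R (\<Sum>i=1..k. lam i *\<^sub>R (y i - z))"
        using Lpos by (simp add: scaleR_diff_right)
      have eq2: "inner \<xi> ((1 / L) *\<^sub>R (\<Sum>i=1..k. lam i *\<^sub>R y i) - z) = (1 / L) * (\<Sum>i=1..k. lam i * inner \<xi> (y i - z))"
        unfolding eq1 by (simp add: inner_sum_right)
      have "2 * (\<Sum>i=1..k. lam i * inner \<xi> (y i - z)) = (\<Sum>j<k. 2 * lam (Suc j) * inner \<xi> (y (Suc j) - z))"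
        by (simp add: sum.atLeast1_atMost_eq sum_distrib_left mult.assoc)
      also have "\<dots> \<le> (\<Sum>j<k. (norm (x j - z))\<^sup>2 - (norm (x (Suc j) - z))\<^sup>2)"
      proof (rule sum_mono)
        fix j assume "j \<in> {..<k}"
        show "2 * lam (Suc j) * inner \<xi> (y (Suc j) - z) \<le> (norm (x j - z))\<^sup>2 - (norm (x (Suc j) - z))\<^sup>2"
          using stepI[OF \<xi>, of j] s2 by (smt (verit) mult_nonneg_nonneg zero_le_power2)
      qed
      also have "\<dots> = (norm (x 0 - z))\<^sup>2 - (norm (x k - z))\<^sup>2" by (rule sum_lessThan_telescope')
      also have "\<dots> \<le> R" using R[OF z] zero_le_power2[of "norm (x k - z)"] by linarith
      finally have "(\<Sum>i=1..k. lam i * inner \<xi> (y i - z)) \<le> R / 2" by simp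
      then have "inner \<xi> ((1 / L) *\<^sub>R (\<Sum>i=1..k. lam i *\<^sub>R y i) - z) \<le> R / (2 * L)"
        unfolding eq2 using Lpos by (simp add: field_simps)
      then show "ereal (inner \<xi> ((1 / L) *\<^sub>R (\<Sum>i=1..k. lam i *\<^sub>R y i) - z))
              \<le> ereal (R / (2 * c) * real k powr (- (real p + 1) / 2))"
        using bound by simp
    qed
  qed
  have part4: "((\<forall>k\<ge>1. eps k = 0) \<and>
          (\<exists>\<delta> \<kappa>. \<delta> > 0 \<and> \<kappa> > 0 \<and>
             (\<forall>z. A z \<noteq> {} \<and> infdist 0 (A z) \<le> \<delta> \<longrightarrow>
                  infdist z (zeros A) \<le> \<kappa> * infdist 0 (A z)))
          \<longrightarrow> (\<exists>k0. \<exists>q. 0 < q \<and> q < 1 \<and>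
                 (\<forall>k\<ge>k0. (infdist (x (Suc k)) (zeros A))\<^sup>2 \<le> q * (infdist (x k) (zeros A))\<^sup>2)))"
  proof (intro impI)
    assume H: "(\<forall>k\<ge>1. eps k = 0) \<and>
          (\<exists>\<delta> \<kappa>. \<delta> > 0 \<and> \<kappa> > 0 \<and>
             (\<forall>z. A z \<noteq> {} \<and> infdist 0 (A z) \<le> \<delta> \<longrightarrow>
                  infdist z (zeros A) \<le> \<kappa> * infdist 0 (A z)))"
    then have e0: "\<And>k. eps (Suc k) = 0" by simp
    from H obtain \<delta> \<kappa> where d: "\<delta> > 0" and kap: "\<kappa> > 0"
      and EB: "\<And>z. A z \<noteq> {} \<Longrightarrow> infdist 0 (A z) \<le> \<delta> \<Longrightarrow> infdist z (zeros A) \<le> \<kappa> * infdist 0 (A z)"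
      by blast
    have Zc: "closed (zeros A)" by (rule zeros_closed[OF maxmono])
    have vinA: "v (Suc k) \<in> A (y (Suc k))" for k
    proof -
      have "\<forall>x' v'. v' \<in> A x' \<longrightarrow> inner (y (Suc k) - x') (v (Suc k) - v') \<ge> 0"
        using incl[of k] e0[of k] unfolding enlargement_def by simp
      then show ?thesis using maxmono unfolding maximal_monotone_def by blast
    qed
    have "summable (\<lambda>j. (b j)\<^sup>2)"
      by (rule summableI_nonneg_bounded[where x = S]) (auto intro: sumb)
    then have lim: "(\<lambda>j. (b j)\<^sup>2) \<longlonglongrightarrow> 0" by (rule summable_LIMSEQ_zero)
    define \<eta> where "\<eta> = min 1 (\<delta> * \<theta> / (1 + \<sigma>))"
    have eta: "\<eta> > 0" using d theta sigma by (simp add: \<eta>_def)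
    have "\<forall>\<^sub>F j in sequentially. (b j)\<^sup>2 < \<eta>\<^sup>2"
      using order_tendstoD(2)[OF lim, of "\<eta>\<^sup>2"] eta by simp
    then obtain k0 where k0: "\<And>j. j \<ge> k0 \<Longrightarrow> (b j)\<^sup>2 < \<eta>\<^sup>2"
      unfolding eventually_sequentially by blast
    define M where "M = \<kappa> * (1 + \<sigma>) / \<theta> + 1"
    have M1: "M \<ge> 1" using kap sigma theta by (simp add: M_def)
    define q where "q = 1 - (1 - \<sigma>\<^sup>2) / M\<^sup>2"
    have M2: "M\<^sup>2 \<ge> 1" using M1 by (simp add: one_le_power)
    have "(1 - \<sigma>\<^sup>2) / M\<^sup>2 < 1" using M2 sigma s2
      by (simp add: divide_less_eq) (smt (verit) zero_less_power2)
    moreover have "(1 - \<sigma>\<^sup>2) / M\<^sup>2 > 0" using M2 s2 by (intro divide_pos_pos) auto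
    ultimately have q: "0 < q" "q < 1" by (auto simp: q_def)
    show "\<exists>k0. \<exists>q. 0 < q \<and> q < 1 \<and>
                 (\<forall>k\<ge>k0. (infdist (x (Suc k)) (zeros A))\<^sup>2 \<le> q * (infdist (x k) (zeros A))\<^sup>2)"
    proof (intro exI conjI allI impI)
      show "0 < q" "q < 1" by (fact q)+
      fix k assume k: "k \<ge> k0"
      have b0: "b k \<ge> 0" by (simp add: b_def)
      have bk: "b k < \<eta>"
        using power2_less_imp_less[OF k0[OF k]] eta by simp
      have "b k ^ (p - 1) \<le> 1" using b0 bk by (intro power_le_one) (auto simp: \<eta>_def)
      then have "lam (Suc k) * b k ^ (p - 1) \<le> lam (Suc k)"
        using lamS[of k] by (simp add: mult_left_le)
      then have lamt: "lam (Suc k) \<ge> \<theta>" using large_step[of k] by (simp add: b_def)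
      have "\<theta> * norm (v (Suc k)) \<le> lam (Suc k) * norm (v (Suc k))"
        using lamt by (simp add: mult_right_mono)
      then have tv: "\<theta> * norm (v (Suc k)) \<le> (1 + \<sigma>) * b k" using bnd3[of k] by linarith
      have vb: "norm (v (Suc k)) \<le> (1 + \<sigma>) / \<theta> * b k" using tv theta by (simp add: field_simps)
      have "(1 + \<sigma>) * b k \<le> (1 + \<sigma>) * (\<delta> * \<theta> / (1 + \<sigma>))"
        using bk sigma by (intro mult_left_mono) (auto simp: \<eta>_def)
      then have "\<theta> * norm (v (Suc k)) \<le> \<theta> * \<delta>" using tv sigma by (simp add: mult.commute)
      then have vd: "norm (v (Suc k)) \<le> \<delta>" using theta by simp
      have id0: "infdist 0 (A (y (Suc k))) \<le> norm (v (Suc k))"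
        using infdist_le[OF vinA[of k], of 0] by simp
      have iy: "infdist (y (Suc k)) (zeros A) \<le> \<kappa> * norm (v (Suc k))"
        using EB[of "y (Suc k)"] vinA[of k] id0 vd kap
        by (smt (verit, best) empty_iff mult_left_mono)
      have "infdist (x k) (zeros A) \<le> infdist (y (Suc k)) (zeros A) + dist (x k) (y (Suc k))"
        by (rule infdist_triangle)
      also have "dist (x k) (y (Suc k)) = b k" by (simp add: b_def dist_norm norm_minus_commute)
      finally have "infdist (x k) (zeros A) \<le> \<kappa> * ((1 + \<sigma>) / \<theta> * b k) + b k"
        using iy vb kap by (smt (verit) mult_left_mono)
      then have DM: "infdist (x k) (zeros A) \<le> M * b k" by (simp add: M_def algebra_simps)
      obtain zk where zk: "zk \<in> zeros A" "infdist (x k) (zeros A) = dist (x k) zk"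
        using infdist_attains_inf[OF Zc zeros_ne] by blast
      have "0 \<in> A zk" using zk(1) by (simp add: zeros_def)
      from stepI[OF this, of k]
      have st: "(norm (x (Suc k) - zk))\<^sup>2 \<le> (norm (x k - zk))\<^sup>2 - (1 - \<sigma>\<^sup>2) * (b k)\<^sup>2" by simp
      have "infdist (x (Suc k)) (zeros A) \<le> norm (x (Suc k) - zk)"
        using infdist_le[OF zk(1)] by (simp add: dist_norm)
      then have D1: "(infdist (x (Suc k)) (zeros A))\<^sup>2 \<le> (norm (x (Suc k) - zk))\<^sup>2"
        by (intro power_mono) (auto simp: infdist_nonneg)
      define D where "D = infdist (x k) (zeros A)"
      have Dn: "D = norm (x k - zk)" using zk(2) by (simp add: D_def dist_norm)
      have D0: "D \<ge> 0" by (simp add: D_def infdist_nonneg)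
      have "D\<^sup>2 \<le> (M * b k)\<^sup>2" using DM D0 by (intro power_mono) (auto simp: D_def)
      then have "D\<^sup>2 / M\<^sup>2 \<le> (b k)\<^sup>2" using M1 by (simp add: field_simps power_mult_distrib)
      then have "(1 - \<sigma>\<^sup>2) * (D\<^sup>2 / M\<^sup>2) \<le> (1 - \<sigma>\<^sup>2) * (b k)\<^sup>2"
        using s2 by (intro mult_left_mono) auto
      then have "(infdist (x (Suc k)) (zeros A))\<^sup>2 \<le> D\<^sup>2 - (1 - \<sigma>\<^sup>2) * (D\<^sup>2 / M\<^sup>2)"
        using D1 st Dn by simp
      also have "\<dots> = q * D\<^sup>2" by (simp add: q_def algebra_simps)
      finally show "(infdist (x (Suc k)) (zeros A))\<^sup>2 \<le> q * (infdist (x k) (zeros A))\<^sup>2"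
        by (simp add: D_def)
    qed
  qed
  show ?thesis using part1 part2 part3 part4 by blast
qed

end
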